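(* If a hard-core configuration $\sigma\in\mathcal{X}$ satisfies $\Delta H(\sigma)<L$, then there exists a path $\omega:\sigma\to\{\mathrm{e},\mathrm{o}\}$ with $\Phi_\omega\le H(\sigma)+1$. In particular, either $\sigma\in C_{\mathrm{e}}$ or $\sigma\in C_{\mathrm{o}}$.
   Context: $L\ge6$ even; $\Lambda=(V,E)$ is the $L\times L$ toric grid graph ($V=\{0,\dots,L-1\}^2$, adjacency = difference $\pm1$ mod $L$ in exactly one coordinate); even/odd sites by parity of coordinate sum. $\mathcal{X}=\{\sigma\in\{0,1\}^V:\sigma(v)\sigma(w)=0$ for adjacent $v,w\}$, $H(\sigma)=-\sum_v\sigma(v)$; $\mathrm{e}$ ($\mathrm{o}$) is the configuration with particles exactly on the even (odd) sites, $H(\mathrm{e})=H(\mathrm{o})=-L^2/2$, and $\Delta H(\sigma)=H(\sigma)-H(\mathrm{e})$. A path is a finite sequence of configurations in $\mathcal{X}$ in which consecutive configurations differ at exactly one site; its height is $\Phi_\omega=\max_{\eta\in\omega}H(\eta)$; a path $\sigma\to\{\mathrm{e},\mathrm{o}\}$ ends in $\mathrm{e}$ or $\mathrm{o}$. $\Phi(\sigma,\sigma')=\min_{\omega:\sigma\to\sigma'}\Phi_\omega$. It is known that $\Phi(\mathrm{e},\mathrm{o})-H(\mathrm{e})=L+1$. The initial cycles are $C_{\mathrm{e}}=\{\zeta\in\mathcal{X}:\Phi(\zeta,\mathrm{e})<\Phi(\mathrm{e},\mathrm{o})\}$ and $C_{\mathrm{o}}=\{\zeta\in\mathcal{X}:\Phi(\zeta,\mathrm{o})<\Phi(\mathrm{e},\mathrm{o})\}$.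 *)

theory Defs
  imports Main
begin

type_synonym site = "nat \<times> nat"
type_synonym config = "site set"   (* set of occupied sites *)

definition sites :: "nat \<Rightarrow> site set" where
  "sites L = {0..<L} \<times> {0..<L}"

definition cyc_nb :: "nat \<Rightarrow> nat \<Rightarrow> nat \<Rightarrow> bool" where
  "cyc_nb L a b \<longleftrightarrow> b = (a + 1) mod L \<or> a = (b + 1) mod L"

definition adj :: "nat \<Rightarrow> site \<Rightarrow> site \<Rightarrow> bool" where
  "adj L v w \<longleftrightarrow> v \<in> sites L \<and> w \<in> sites L \<and>
     ((fst v = fst w \<and> cyc_nb L (snd v) (snd w)) \<or> (snd v = snd w \<and> cyc_nb L (fst v) (fst w)))"

definition hc :: "nat \<Rightarrow> config set" where
  "hc L = {\<sigma>. \<sigma> \<subseteq> sites L \<and> (\<forall>v\<in>\<sigma>. \<forall>w\<in>\<sigma>. \<not> adj L v w)}"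

definition H :: "config \<Rightarrow> int" where
  "H \<sigma> = - int (card \<sigma>)"

definition even_conf :: "nat \<Rightarrow> config" where
  "even_conf L = {v \<in> sites L. even (fst v + snd v)}"

definition odd_conf :: "nat \<Rightarrow> config" where
  "odd_conf L = {v \<in> sites L. odd (fst v + snd v)}"

definition DeltaH :: "nat \<Rightarrow> config \<Rightarrow> int" where
  "DeltaH L \<sigma> = H \<sigma> - H (even_conf L)"

definition is_path :: "nat \<Rightarrow> config list \<Rightarrow> bool" where
  "is_path L \<omega> \<longleftrightarrow> \<omega> \<noteq> [] \<and> set \<omega> \<subseteq> hc L \<and>
     (\<forall>i. Suc i < length \<omega> \<longrightarrow> card ((\<omega>!i - \<omega>!Suc i) \<union> (\<omega>!Suc i - \<omega>!i)) = 1)"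

definition path_from_to :: "nat \<Rightarrow> config list \<Rightarrow> config \<Rightarrow> config \<Rightarrow> bool" where
  "path_from_to L \<omega> \<sigma> \<sigma>' \<longleftrightarrow> is_path L \<omega> \<and> hd \<omega> = \<sigma> \<and> last \<omega> = \<sigma>'"

definition height :: "config list \<Rightarrow> int" where
  "height \<omega> = Max (H ` set \<omega>)"

definition comm_height :: "nat \<Rightarrow> config \<Rightarrow> config \<Rightarrow> int" where
  "comm_height L \<sigma> \<sigma>' = Min {height \<omega> | \<omega>. path_from_to L \<omega> \<sigma> \<sigma>'}"

definition cycle_e :: "nat \<Rightarrow> config set" where
  "cycle_e L = {\<zeta> \<in> hc L. comm_height L \<zeta> (even_conf L) < comm_height L (even_conf L) (odd_conf L)}"

definition cycle_o :: "nat \<Rightarrow> config set" where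
  "cycle_o L = {\<zeta> \<in> hc L. comm_height L \<zeta> (odd_conf L) < comm_height L (even_conf L) (odd_conf L)}"

end

theory Submission
  imports Defs
begin

lemma suc_mod_eq: "(x::nat) < L \<Longrightarrow> (x+1) mod L = (if x + 1 = L then 0 else x + 1)"
  by (cases "x + 1 = L") auto

lemma cyc_nb_parity:
  assumes "even L" "a < L" "b < L" "cyc_nb L a b"
  shows "even a \<noteq> even b"
proof -
  have *: "even x \<noteq> even ((x+1) mod L)" if "x < L" for x
  proof (cases "x + 1 = L")
    case True then show ?thesis using assms(1) by auto
  next
    case False then show ?thesis using that by simp
  qed
  show ?thesis using assms(4) *[OF assms(2)] *[OF assms(3)] unfolding cyc_nb_def by auto
qed

lemma adj_parity: "even L \<Longrightarrow> adj L v w \<Longrightarrow> even (fst v + snd v) \<noteq> even (fst w + snd w)"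
  unfolding adj_def sites_def using cyc_nb_parity[of L] by auto

lemma adj_sym: "adj L v w = adj L w v" unfolding adj_def cyc_nb_def by auto

lemma adj_irrefl: "even L \<Longrightarrow> \<not> adj L v v" using adj_parity by blast

lemma adj_succ: "L > 0 \<Longrightarrow> a < L \<Longrightarrow> y < L \<Longrightarrow> adj L (a,y) ((a+1) mod L, y)"
  unfolding adj_def sites_def cyc_nb_def by auto

lemma adj_succ2: "L > 0 \<Longrightarrow> x < L \<Longrightarrow> y < L \<Longrightarrow> adj L (x,y) (x, (y+1) mod L)"
  unfolding adj_def sites_def cyc_nb_def by auto

lemma suc_mod_inj: "(x::nat) < L \<Longrightarrow> a < L \<Longrightarrow> (x+1) mod L = (a+1) mod L \<Longrightarrow> x = a"
  using suc_mod_eq[of x L] suc_mod_eq[of a L] by (auto split: if_splits)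

lemma nbrs:
  assumes "adj L (d,y) w" "d = (a+1) mod L" "a < L"
  shows "w = (a,y) \<or> w = ((d+1) mod L, y) \<or> (fst w = d \<and> cyc_nb L y (snd w))"
proof -
  obtain x z where w: "w = (x,z)" by (cases w)
  have xL: "x < L" using assms(1) w unfolding adj_def sites_def by auto
  show ?thesis using assms(1) unfolding w adj_def cyc_nb_def
    using suc_mod_inj[OF xL assms(3)] assms(2) by auto
qed

inductive reach :: "nat \<Rightarrow> int \<Rightarrow> config \<Rightarrow> config \<Rightarrow> bool" for L :: nat and h :: int where
  rrefl: "\<sigma> \<in> hc L \<Longrightarrow> H \<sigma> \<le> h \<Longrightarrow> reach L h \<sigma> \<sigma>"
| rstep: "\<sigma> \<in> hc L \<Longrightarrow> H \<sigma> \<le> h \<Longrightarrow> card ((\<sigma> - \<sigma>') \<union> (\<sigma>' - \<sigma>)) = 1 \<Longrightarrow> reach L h \<sigma>' \<tau> \<Longrightarrow> reach L h \<sigma> \<tau>"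

lemma reach_trans: "reach L h \<sigma> \<tau> \<Longrightarrow> reach L h \<tau> \<rho> \<Longrightarrow> reach L h \<sigma> \<rho>"
  by (induction rule: reach.induct) (auto intro: reach.intros)

lemma reach_path: "reach L h \<sigma> \<tau> \<Longrightarrow> \<exists>\<omega>. path_from_to L \<omega> \<sigma> \<tau> \<and> (\<forall>\<eta>\<in>set \<omega>. H \<eta> \<le> h)"
proof (induction rule: reach.induct)
  case (rrefl \<sigma>) then show ?case by (intro exI[of _ "[\<sigma>]"]) (auto simp: path_from_to_def is_path_def)
next
  case (rstep \<sigma> \<sigma>' \<tau>)
  then obtain \<omega> where \<omega>: "path_from_to L \<omega> \<sigma>' \<tau>" "\<forall>\<eta>\<in>set \<omega>. H \<eta> \<le> h" by blast
  have ne: "\<omega> \<noteq> []" and hd: "hd \<omega> = \<sigma>'" and lst: "last \<omega> = \<tau>" and sub: "set \<omega> \<subseteq> hc L"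
    and stp: "\<forall>i. Suc i < length \<omega> \<longrightarrow> card ((\<omega>!i - \<omega>!Suc i) \<union> (\<omega>!Suc i - \<omega>!i)) = 1"
    using \<omega>(1) unfolding path_from_to_def is_path_def by auto
  have "path_from_to L (\<sigma> # \<omega>) \<sigma> \<tau>"
    unfolding path_from_to_def is_path_def
  proof (intro conjI allI impI)
    fix i assume i: "Suc i < length (\<sigma> # \<omega>)"
    show "card (((\<sigma> # \<omega>)!i - (\<sigma> # \<omega>)!Suc i) \<union> ((\<sigma> # \<omega>)!Suc i - (\<sigma> # \<omega>)!i)) = 1"
    proof (cases i)
      case 0 then show ?thesis using rstep(3) hd ne by (simp add: hd_conv_nth)
    next
      case (Suc j) then show ?thesis using stp i by auto
    qed
  qed (use ne lst sub rstep(1) in auto)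
  then show ?case using \<omega>(2) rstep(2) by (intro exI[of _ "\<sigma> # \<omega>"]) auto
qed

lemma height_le: "\<omega> \<noteq> [] \<Longrightarrow> \<forall>\<eta>\<in>set \<omega>. H \<eta> \<le> h \<Longrightarrow> height \<omega> \<le> h"
  unfolding height_def by simp

lemma reach_add: "\<tau> \<in> hc L \<Longrightarrow> H \<tau> \<le> h \<Longrightarrow> v \<notin> \<tau> \<Longrightarrow> reach L h (insert v \<tau>) \<rho> \<Longrightarrow> reach L h \<tau> \<rho>"
proof -
  assume a: "\<tau> \<in> hc L" "H \<tau> \<le> h" "v \<notin> \<tau>" "reach L h (insert v \<tau>) \<rho>"
  have "(\<tau> - insert v \<tau>) \<union> (insert v \<tau> - \<tau>) = {v}" using a(3) by auto
  then show ?thesis using a by (intro rstep[of \<tau> _ _ "insert v \<tau>"]) auto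
qed

lemma reach_remove: "\<tau> \<in> hc L \<Longrightarrow> H \<tau> \<le> h \<Longrightarrow> w \<in> \<tau> \<Longrightarrow> reach L h (\<tau> - {w}) \<rho> \<Longrightarrow> reach L h \<tau> \<rho>"
proof -
  assume a: "\<tau> \<in> hc L" "H \<tau> \<le> h" "w \<in> \<tau>" "reach L h (\<tau> - {w}) \<rho>"
  have "(\<tau> - (\<tau> - {w})) \<union> ((\<tau> - {w}) - \<tau>) = {w}" using a(3) by auto
  then show ?thesis using a by (intro rstep[of \<tau> _ _ "\<tau> - {w}"]) auto
qed

lemma finite_sites: "finite (sites L)" unfolding sites_def by auto

lemma hc_finite: "\<tau> \<in> hc L \<Longrightarrow> finite \<tau>"
  unfolding hc_def using finite_sites finite_subset by blast

lemma hc_subset: "\<tau> \<in> hc L \<Longrightarrow> \<tau>' \<subseteq> \<tau> \<Longrightarrow> \<tau>' \<in> hc L"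
  unfolding hc_def by blast

lemma step_lemma:
  assumes L: "even L" "L > 0"
  and hc: "\<tau> \<in> hc L" and a: "a < L" and y: "y < L"
  and full: "\<forall>y'<L. ((a,y') \<in> \<tau> \<longleftrightarrow> even (a+y') = q)"
  and d: "d = (a+1) mod L"
  and v: "even (d + y) = q" "(d,y) \<notin> \<tau>"
  and hh: "H \<tau> + 1 \<le> h"
  and T: "T = {v \<in> sites L. even (fst v + snd v) = q}"
  shows "\<exists>\<tau>'. \<tau>' \<in> hc L \<and> reach L h \<tau> \<tau>' \<and> H \<tau>' \<le> H \<tau> \<and> \<tau> \<inter> T \<subseteq> \<tau>' \<and> \<tau>' \<subseteq> \<tau> \<union> T \<and> (d,y) \<in> \<tau>'"
proof -
  define v where "v = (d,y)"
  define w0 where "w0 = ((d+1) mod L, y)"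
  have dL: "d < L" using d L by simp
  have cyc: "cyc_nb L a d" using d unfolding cyc_nb_def by simp
  have par: "even a \<noteq> even d" using cyc_nb_parity[OF L(1) a dL cyc] .
  have vT: "v \<in> T" using T v dL y unfolding v_def sites_def by auto
  have hcs: "\<tau> \<subseteq> sites L" "\<forall>x\<in>\<tau>. \<forall>z\<in>\<tau>. \<not> adj L x z" using hc unfolding hc_def by auto
  have nb: "u = w0" if u: "u \<in> \<tau>" "adj L v u" for u
  proof -
    have "u = (a,y) \<or> u = w0 \<or> (fst u = d \<and> cyc_nb L y (snd u))"
      using nbrs[of L d y u a, OF _ d a] u(2) unfolding v_def w0_def by blast
    moreover have "u \<noteq> (a,y)"
    proof
      assume "u = (a,y)"
      moreover have "even (a + y) \<noteq> q" using par v(1) by auto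
      ultimately show False using full y u(1) by auto
    qed
    moreover have "\<not> (fst u = d \<and> cyc_nb L y (snd u))"
    proof
      assume A: "fst u = d \<and> cyc_nb L y (snd u)"
      obtain y' where u': "u = (d,y')" using A by (cases u) auto
      have y'L: "y' < L" using u(1) hcs(1) u' unfolding sites_def by auto
      have "even y \<noteq> even y'" using cyc_nb_parity[OF L(1) y y'L] A u' by auto
      then have "even (a + y') = q" using par v(1) by auto
      then have "(a,y') \<in> \<tau>" using full y'L by auto
      moreover have "adj L (a,y') u" using adj_succ[OF L(2) a y'L] u' d by simp
      ultimately show False using hcs(2) u(1) by blast
    qed
    ultimately show ?thesis by blast
  qed
  have adjw0: "adj L v w0" using adj_succ[OF L(2) dL y] unfolding v_def w0_def .
  have w0T: "w0 \<notin> T" if "w0 \<in> \<tau>"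
    using adj_parity[OF L(1) adjw0] vT T by auto
  define \<tau>' where "\<tau>' = insert v (\<tau> - {w0})"
  have vsites: "v \<in> sites L" using vT T by auto
  have hc': "\<tau>' \<in> hc L"
    unfolding hc_def
  proof (intro CollectI conjI ballI)
    show "\<tau>' \<subseteq> sites L" using hcs(1) vsites unfolding \<tau>'_def by auto
  next
    fix x z assume xz: "x \<in> \<tau>'" "z \<in> \<tau>'"
    show "\<not> adj L x z"
    proof
      assume ad: "adj L x z"
      consider "x = v" "z = v" | "x = v" "z \<in> \<tau> - {w0}" | "x \<in> \<tau> - {w0}" "z = v" | "x \<in> \<tau>" "z \<in> \<tau>"
        using xz unfolding \<tau>'_def by auto
      then show False
      proof cases
        case 1 then show ?thesis using ad adj_irrefl[OF L(1)] by simp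
      next
        case 2 then show ?thesis using ad nb by blast
      next
        case 3 then have "adj L v x" using ad adj_sym[of L x v] by simp
        then show ?thesis using 3 nb by blast
      next
        case 4 then show ?thesis using ad hcs(2) by blast
      qed
    qed
  qed
  have fin: "finite \<tau>" using hc_finite[OF hc] .
  have vnot: "v \<notin> \<tau>" using v(2) unfolding v_def .
  have Hle: "H \<tau>' \<le> H \<tau>"
  proof (cases "w0 \<in> \<tau>")
    case True
    have c1: "card (\<tau> - {w0}) = card \<tau> - 1" using True by (simp add: card_Diff_singleton)
    have c2: "card \<tau> > 0" using True fin card_gt_0_iff by blast
    have "card \<tau>' = Suc (card (\<tau> - {w0}))" unfolding \<tau>'_def using fin vnot by simp
    then have "card \<tau>' = card \<tau>" using c1 c2 by simp
    then show ?thesis unfolding H_def by simp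
  next
    case False
    then have "card \<tau>' = card \<tau> + 1" unfolding \<tau>'_def using fin vnot by simp
    then show ?thesis unfolding H_def by simp
  qed
  have re: "reach L h \<tau> \<tau>'"
  proof (cases "w0 \<in> \<tau>")
    case True
    have h1: "\<tau> - {w0} \<in> hc L" using hc_subset[OF hc] by blast
    have c1: "card (\<tau> - {w0}) = card \<tau> - 1" using True by (simp add: card_Diff_singleton)
    have c2: "card \<tau> > 0" using True fin card_gt_0_iff by blast
    have "H (\<tau> - {w0}) = H \<tau> + 1" unfolding H_def using c1 c2 by simp
    then have r1: "reach L h (\<tau> - {w0}) \<tau>'"
      using reach_add[OF h1, of h v \<tau>'] rrefl[OF hc', of h] Hle hh vnot
      unfolding \<tau>'_def by simp
    show ?thesis using reach_remove[OF hc _ True r1] hh by simp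
  next
    case False
    then have "\<tau> - {w0} = \<tau>" by auto
    then show ?thesis using reach_add[OF hc, of h v \<tau>'] rrefl[OF hc', of h] Hle hh vnot
      unfolding \<tau>'_def by simp
  qed
  have s1: "\<tau> \<inter> T \<subseteq> \<tau>'" using w0T unfolding \<tau>'_def by auto
  have s2: "\<tau>' \<subseteq> \<tau> \<union> T" using vT unfolding \<tau>'_def by auto
  have "(d,y) \<in> \<tau>'" unfolding \<tau>'_def v_def by simp
  then show ?thesis using hc' re Hle s1 s2 by blast
qed

lemma full_pres:
  assumes "\<forall>y'<L. ((x,y')\<in>\<tau> \<longleftrightarrow> even(x+y')=q)" "x<L"
    "\<tau> \<inter> {v \<in> sites L. even (fst v + snd v) = q} \<subseteq> \<tau>'" "\<tau>' \<subseteq> \<tau> \<union> {v \<in> sites L. even (fst v + snd v) = q}"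
  shows "\<forall>y'<L. ((x,y')\<in>\<tau>' \<longleftrightarrow> even(x+y')=q)"
proof (intro allI impI)
  fix y' :: nat assume y': "y' < L"
  have s: "(x,y') \<in> sites L" using y' assms(2) unfolding sites_def by auto
  show "((x,y')\<in>\<tau>' \<longleftrightarrow> even(x+y')=q)"
    using assms(1)[rule_format, OF y'] assms(3,4) s by auto
qed

lemma find_col:
  fixes P :: "nat \<Rightarrow> bool"
  assumes "P x0" "x0 < L" "c < L" "\<not> P c"
  shows "\<exists>a<L. P a \<and> \<not> P ((a+1) mod L)"
proof (rule ccontr)
  assume "\<not> ?thesis"
  then have st: "\<And>a. a < L \<Longrightarrow> P a \<Longrightarrow> P ((a+1) mod L)" by blast
  have "P ((x0 + k) mod L)" for k
  proof (induction k)
    case 0 then show ?case using assms by simp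
  next
    case (Suc k)
    have "(x0 + Suc k) mod L = ((x0 + k) mod L + 1) mod L" by (simp add: mod_Suc_eq)
    moreover have "(x0 + k) mod L < L" using assms(2) by simp
    ultimately show ?case using st Suc by simp
  qed
  from this[of "c + L - x0"] have "P ((c + L) mod L)" using assms(2) by simp
  then show False using assms(3,4) by simp
qed

lemma main_induct:
  assumes L: "even L" "L > 0" and x0: "x0 < L"
    and T: "T = {v \<in> sites L. even (fst v + snd v) = q}"
  shows "card (T - \<tau>) = n \<Longrightarrow> \<tau> \<in> hc L \<Longrightarrow> \<forall>y'<L. ((x0,y')\<in>\<tau> \<longleftrightarrow> even(x0+y')=q)
         \<Longrightarrow> H \<tau> + 1 \<le> h \<Longrightarrow> reach L h \<tau> T"
proof (induction n arbitrary: \<tau> rule: less_induct)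
  case (less n \<tau>)
  let ?P = "\<lambda>x. \<forall>y'<L. ((x,y')\<in>\<tau> \<longleftrightarrow> even(x+y')=q)"
  show ?case
  proof (cases "\<tau> = T")
    case True then show ?thesis using less.prems by (auto intro: rrefl)
  next
    case False
    have sub: "\<tau> \<subseteq> sites L" using less.prems(2) unfolding hc_def by auto
    have "\<exists>c<L. \<not> ?P c"
    proof (rule ccontr)
      assume "\<not> (\<exists>c<L. \<not> ?P c)"
      then have allP: "\<And>c. c < L \<Longrightarrow> ?P c" by blast
      have "\<tau> = T"
      proof
        show "\<tau> \<subseteq> T"
        proof
          fix u assume u: "u \<in> \<tau>"
          obtain x z where xz: "u = (x,z)" by (cases u)
          have "x < L" "z < L" using u sub xz unfolding sites_def by auto
          then show "u \<in> T" using allP u xz T sub by auto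
        qed
      next
        show "T \<subseteq> \<tau>"
        proof
          fix u assume u: "u \<in> T"
          obtain x z where xz: "u = (x,z)" by (cases u)
          have "x < L" "z < L" using u xz T unfolding sites_def by auto
          then show "u \<in> \<tau>" using allP u xz T by auto
        qed
      qed
      then show False using False by simp
    qed
    then obtain c where c: "c < L" "\<not> ?P c" by blast
    obtain a where a: "a < L" "?P a" "\<not> ?P ((a+1) mod L)"
      using find_col[of ?P x0 L c, OF less.prems(3) x0 c] by blast
    define d where "d = (a+1) mod L"
    have dL: "d < L" using d_def L by simp
    have par: "even a \<noteq> even d" using cyc_nb_parity[OF L(1) a(1) dL] unfolding d_def cyc_nb_def by simp
    obtain y where y: "y < L" "\<not> ((d,y)\<in>\<tau> \<longleftrightarrow> even(d+y)=q)" using a(3) unfolding d_def by blast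
    have vy: "even (d+y) = q \<and> (d,y) \<notin> \<tau>"
    proof (rule ccontr)
      assume "\<not> ?thesis"
      then have A: "(d,y) \<in> \<tau>" "even (d+y) \<noteq> q" using y by auto
      then have "even (a+y) = q" using par by auto
      then have "(a,y) \<in> \<tau>" using a(2) y by auto
      moreover have "adj L (a,y) (d,y)" using adj_succ[OF L(2) a(1) y(1)] d_def by simp
      ultimately show False using A less.prems(2) unfolding hc_def by blast
    qed
    obtain \<tau>' where \<tau>': "\<tau>' \<in> hc L" "reach L h \<tau> \<tau>'" "H \<tau>' \<le> H \<tau>" "\<tau> \<inter> T \<subseteq> \<tau>'" "\<tau>' \<subseteq> \<tau> \<union> T" "(d,y) \<in> \<tau>'"
      using step_lemma[OF L less.prems(2) a(1) y(1) a(2) d_def _ _ less.prems(4) T] vy by blast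
    have finT: "finite T" using T finite_sites by auto
    have "T - \<tau>' \<subset> T - \<tau>"
    proof
      show "T - \<tau>' \<subseteq> T - \<tau>" using \<tau>'(4) by auto
      have "(d,y) \<in> T" using vy dL y T unfolding sites_def by auto
      then show "T - \<tau>' \<noteq> T - \<tau>" using vy \<tau>'(6) by auto
    qed
    then have lt: "card (T - \<tau>') < n" using psubset_card_mono finT less.prems(1) by (metis finite_Diff)
    have P': "\<forall>y'<L. ((x0,y')\<in>\<tau>' \<longleftrightarrow> even(x0+y')=q)"
      using full_pres[OF less.prems(3) x0, of \<tau>'] \<tau>'(4,5) T by simp
    have "reach L h \<tau>' T" using less.IH[OF lt refl \<tau>'(1) P'] \<tau>'(3) less.prems(4) by simp
    then show ?thesis using reach_trans \<tau>'(2) by blast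
  qed
qed

lemma col_bound:
  assumes L: "even L" "L > 0" and A: "A \<subseteq> {0..<L}" and nb: "\<forall>y\<in>A. (y+1) mod L \<notin> A"
  shows "card A \<le> L div 2" and "card A = L div 2 \<Longrightarrow> \<exists>q. A = {y. y < L \<and> even y = q}"
proof -
  have adjA: "y + 1 \<notin> A" if "y \<in> A" "y + 1 < L" for y
    using nb that by auto
  have inj: "inj_on (\<lambda>y. y div 2) A"
  proof
    fix y1 y2 assume y: "y1 \<in> A" "y2 \<in> A" "y1 div 2 = y2 div 2"
    show "y1 = y2"
    proof (rule ccontr)
      assume ne: "y1 \<noteq> y2"
      have "y2 = y1 + 1 \<or> y1 = y2 + 1" using y(3) ne by presburger
      then show False
      proof
        assume e: "y2 = y1 + 1"
        then have "y1 + 1 < L" using y A by auto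
        then show False using adjA[OF y(1)] e y(2) by simp
      next
        assume e: "y1 = y2 + 1"
        then have "y2 + 1 < L" using y A by auto
        then show False using adjA[OF y(2)] e y(1) by simp
      qed
    qed
  qed
  have img: "(\<lambda>y. y div 2) ` A \<subseteq> {0..<L div 2}"
  proof
    fix k assume "k \<in> (\<lambda>y. y div 2) ` A"
    then obtain y where "y \<in> A" "k = y div 2" by blast
    then have "y < L" "k = y div 2" using A by auto
    then show "k \<in> {0..<L div 2}" using L(1) by simp presburger
  qed
  have cA: "card A = card ((\<lambda>y. y div 2) ` A)" using card_image[OF inj] by simp
  show "card A \<le> L div 2" using cA card_mono[OF _ img] by simp
  assume eq: "card A = L div 2"
  have finA: "finite A" using A finite_subset by blast
  have imgeq: "(\<lambda>y. y div 2) ` A = {0..<L div 2}"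
    using card_subset_eq[OF _ img] cA eq by simp
  have pair: "2*k \<in> A \<or> 2*k+1 \<in> A" if "k < L div 2" for k
  proof -
    have "k \<in> (\<lambda>y. y div 2) ` A" using imgeq that by simp
    then obtain y where "y \<in> A" "k = y div 2" by blast
    moreover have "y = 2*k \<or> y = 2*k+1" using calculation(2) by presburger
    ultimately show ?thesis by auto
  qed
  have O: "2*j+1 \<in> A" if "2*k+1 \<in> A" "k \<le> j" "j < L div 2" for k j
    using that(2,3)
  proof (induction j rule: dec_induct)
    case base then show ?case using that(1) by simp
  next
    case (step j)
    have "2*j+2 < L" using step L(1) by auto
    then have "2*j+2 \<notin> A" using adjA[OF step.IH] step by simp
    then show ?case using pair[OF step.prems] by (simp add: algebra_simps)
  qed
  have L2: "L div 2 > 0" using L by auto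
  show "\<exists>q. A = {y. y < L \<and> even y = q}"
  proof (cases "1 \<in> A")
    case True
    have "A = {y. y < L \<and> even y = False}"
    proof
      show "A \<subseteq> {y. y < L \<and> even y = False}"
      proof
        fix y assume y: "y \<in> A"
        have yL: "y < L" using y A by auto
        have "odd y"
        proof
          assume ev: "even y"
          then obtain k where k: "y = 2*k" by blast
          have kL: "k < L div 2" using yL k L(1) by auto
          have "2*k+1 \<in> A" using O[of 0 k] True kL by simp
          moreover have "2*k+1 < L" using yL k L(1) by presburger
          ultimately show False using adjA y k by simp
        qed
        then show "y \<in> {y. y < L \<and> even y = False}" using yL by simp
      qed
    next
      show "{y. y < L \<and> even y = False} \<subseteq> A"
      proof
        fix y assume y: "y \<in> {y. y < L \<and> even y = False}"
        then have "odd y" by simp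
        then obtain k where k: "y = 2*k+1" by (rule oddE)
        have kL: "k < L div 2" using y k L(1) by auto
        show "y \<in> A" using O[of 0 k] True kL k by simp
      qed
    qed
    then show ?thesis by blast
  next
    case False
    have zero: "0 \<in> A" using pair[OF L2] False by simp
    have noodd: "2*k+1 \<notin> A" for k
    proof
      assume k: "2*k+1 \<in> A"
      have kL: "k < L div 2" using k A L(1) by auto
      have "2*(L div 2 - 1)+1 \<in> A" using O[OF k, of "L div 2 - 1"] kL by simp
      moreover have "2*(L div 2 - 1)+1 = L - 1" using L by auto
      ultimately have "L - 1 \<in> A" by simp
      moreover have "(L - 1 + 1) mod L = 0" using L by simp
      ultimately show False using nb zero by metis
    qed
    have "A = {y. y < L \<and> even y = True}"
    proof
      show "A \<subseteq> {y. y < L \<and> even y = True}"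
      proof
        fix y assume y: "y \<in> A"
        have "even y" using noodd y by (metis oddE)
        then show "y \<in> {y. y < L \<and> even y = True}" using y A by auto
      qed
    next
      show "{y. y < L \<and> even y = True} \<subseteq> A"
      proof
        fix y assume y: "y \<in> {y. y < L \<and> even y = True}"
        then obtain k where k: "y = 2*k" by auto
        have kL: "k < L div 2" using y k L(1) by auto
        show "y \<in> A" using pair[OF kL] noodd k by auto
      qed
    qed
    then show ?thesis by blast
  qed
qed

lemma exists_full_col:
  assumes L: "even L" "L > 0" and hc: "\<sigma> \<in> hc L" and dh: "DeltaH L \<sigma> < int L"
  shows "\<exists>x0<L. \<exists>q. \<forall>y<L. ((x0,y)\<in>\<sigma> \<longleftrightarrow> even(x0+y) = q)"
proof (rule ccontr)
  assume nex: "\<not> ?thesis"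
  define A where "A x = {y. (x,y) \<in> \<sigma>}" for x
  have sub: "\<sigma> \<subseteq> sites L" and ind: "\<forall>v\<in>\<sigma>. \<forall>w\<in>\<sigma>. \<not> adj L v w" using hc unfolding hc_def by auto
  have AL: "A x \<subseteq> {0..<L}" for x using sub unfolding A_def sites_def by auto
  have Anb: "\<forall>y\<in>A x. (y+1) mod L \<notin> A x" if x: "x < L" for x
  proof (intro ballI notI)
    fix y assume y: "y \<in> A x" "(y+1) mod L \<in> A x"
    have "y < L" using y(1) AL[of x] by auto
    then have "adj L (x,y) (x, (y+1) mod L)" using adj_succ2[OF L(2) x] by simp
    then show False using y ind unfolding A_def by auto
  qed
  have sig: "\<sigma> = Sigma {0..<L} A" using sub unfolding A_def sites_def by auto
  have finA: "finite (A x)" for x using AL finite_subset by blast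
  have cs: "card \<sigma> = (\<Sum>x\<in>{0..<L}. card (A x))" using sig card_SigmaI[of "{0..<L}" A] finA by simp
  have small: "card (A x) \<le> L div 2 - 1" if x: "x < L" for x
  proof -
    have le: "card (A x) \<le> L div 2" using col_bound(1)[OF L AL Anb[OF x]] .
    have "card (A x) \<noteq> L div 2"
    proof
      assume "card (A x) = L div 2"
      then obtain q where q: "A x = {y. y < L \<and> even y = q}" using col_bound(2)[OF L AL Anb[OF x]] by blast
      have "\<forall>y<L. ((x,y)\<in>\<sigma> \<longleftrightarrow> even(x+y) = (even x = q))"
      proof (intro allI impI)
        fix y assume "y < L"
        then have "(x,y)\<in>\<sigma> \<longleftrightarrow> even y = q" using q unfolding A_def by blast
        then show "(x,y)\<in>\<sigma> \<longleftrightarrow> even(x+y) = (even x = q)" by auto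
      qed
      then show False using nex x by blast
    qed
    then show ?thesis using le by simp
  qed
  have s1: "card \<sigma> \<le> L * (L div 2 - 1)"
    using cs sum_mono[of "{0..<L}" "\<lambda>x. card (A x)" "\<lambda>x. L div 2 - 1"] small by simp
  define E where "E x = {y. y < L \<and> even (x+y)}" for x
  have esig: "even_conf L = Sigma {0..<L} E" unfolding even_conf_def E_def sites_def by auto
  have big: "L div 2 \<le> card (E x)" for x
  proof -
    have "inj_on (\<lambda>k. 2*k + x mod 2) {0..<L div 2}" by (auto simp: inj_on_def)
    moreover have "(\<lambda>k. 2*k + x mod 2) ` {0..<L div 2} \<subseteq> E x"
    proof
      fix z assume "z \<in> (\<lambda>k. 2*k + x mod 2) ` {0..<L div 2}"
      then obtain k where k: "k < L div 2" "z = 2*k + x mod 2" by auto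
      have "z < L" using k L(1) by presburger
      moreover have "even (x + z)" using k by presburger
      ultimately show "z \<in> E x" unfolding E_def by simp
    qed
    moreover have "finite (E x)" unfolding E_def by simp
    ultimately show ?thesis using card_inj_on_le by fastforce
  qed
  have finE: "finite (E x)" for x unfolding E_def by simp
  have ce: "card (even_conf L) = (\<Sum>x\<in>{0..<L}. card (E x))" using esig card_SigmaI[of "{0..<L}" E] finE by simp
  have s2: "L * (L div 2) \<le> card (even_conf L)"
    using ce sum_mono[of "{0..<L}" "\<lambda>x. L div 2" "\<lambda>x. card (E x)"] big by simp
  have m: "L div 2 \<ge> 1" using L by auto
  have "L * (L div 2 - 1) + L = L * (L div 2)" using m
    by (metis add.commute le_add_diff_inverse mult.right_neutral distrib_left)
  then have "card \<sigma> + L \<le> card (even_conf L)" using s1 s2 by linarith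
  then have "DeltaH L \<sigma> \<ge> int L" unfolding DeltaH_def H_def by linarith
  then show False using dh by simp
qed

lemma comm_height_le:
  assumes "path_from_to L \<omega> \<sigma> \<tau>"
  shows "comm_height L \<sigma> \<tau> \<le> height \<omega>"
proof -
  let ?S = "{height \<omega> | \<omega>. path_from_to L \<omega> \<sigma> \<tau>}"
  have "?S \<subseteq> {- int (L*L)..0}"
  proof
    fix x assume "x \<in> ?S"
    then obtain \<omega>' where w: "x = height \<omega>'" "path_from_to L \<omega>' \<sigma> \<tau>" by blast
    then have ne: "\<omega>' \<noteq> []" and sub: "set \<omega>' \<subseteq> hc L" unfolding path_from_to_def is_path_def by auto
    have "height \<omega>' \<in> H ` set \<omega>'" unfolding height_def using ne by (intro Max_in) auto
    then obtain \<eta> where e: "\<eta> \<in> set \<omega>'" "height \<omega>' = H \<eta>" by auto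
    have "\<eta> \<subseteq> sites L" using e sub unfolding hc_def by auto
    then have "card \<eta> \<le> card (sites L)" using card_mono finite_sites by blast
    moreover have "card (sites L) = L * L" unfolding sites_def by simp
    ultimately have "card \<eta> \<le> L * L" by simp
    then have "int (card \<eta>) \<le> int (L * L)" by (simp only: of_nat_le_iff)
    then show "x \<in> {- int (L*L)..0}" using w e unfolding H_def by (simp del: of_nat_mult)
  qed
  then have "finite ?S" using finite_subset by blast
  then show ?thesis unfolding comm_height_def using assms by (intro Min_le) auto
qed

theorem lemma4p1:
  fixes L :: nat and \<sigma> :: config
  assumes "even L" and "L \<ge> 6"
    and known: "comm_height L (even_conf L) (odd_conf L) - H (even_conf L) = int L + 1"
    and "\<sigma> \<in> hc L"
    and "DeltaH L \<sigma> < int L"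
  shows "(\<exists>\<omega>. (path_from_to L \<omega> \<sigma> (even_conf L) \<or> path_from_to L \<omega> \<sigma> (odd_conf L))
              \<and> height \<omega> \<le> H \<sigma> + 1)
         \<and> (\<sigma> \<in> cycle_e L \<or> \<sigma> \<in> cycle_o L)"
proof -
  have L: "even L" "L > 0" using assms(1,2) by auto
  obtain x0 q where x0: "x0 < L" "\<forall>y<L. ((x0,y)\<in>\<sigma> \<longleftrightarrow> even(x0+y) = q)"
    using exists_full_col[OF L assms(4,5)] by blast
  define T where "T = {v \<in> sites L. even (fst v + snd v) = q}"
  have "reach L (H \<sigma> + 1) \<sigma> T"
    using main_induct[OF L x0(1) T_def refl assms(4) x0(2)] by simp
  then obtain \<omega> where \<omega>: "path_from_to L \<omega> \<sigma> T" "\<forall>\<eta>\<in>set \<omega>. H \<eta> \<le> H \<sigma> + 1"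
    using reach_path by blast
  have ne: "\<omega> \<noteq> []" using \<omega>(1) unfolding path_from_to_def is_path_def by auto
  have hgt: "height \<omega> \<le> H \<sigma> + 1" using height_le[OF ne \<omega>(2)] .
  have Tcases: "T = even_conf L \<or> T = odd_conf L"
    unfolding T_def even_conf_def odd_conf_def by (cases q) auto
  have lt: "H \<sigma> + 1 < comm_height L (even_conf L) (odd_conf L)"
    using known assms(5) unfolding DeltaH_def by linarith
  have "comm_height L \<sigma> T < comm_height L (even_conf L) (odd_conf L)"
    using comm_height_le[OF \<omega>(1)] hgt lt by linarith
  then have "\<sigma> \<in> cycle_e L \<or> \<sigma> \<in> cycle_o L"
    using Tcases assms(4) unfolding cycle_e_def cycle_o_def by auto
  then show ?thesis using \<omega>(1) hgt Tcases by auto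
qed

end
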